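(* Let $n\ge 2$ and $\lambda>0$. For each $k=1,\ldots,n$, let $\tau^k_1,\ldots,\tau^k_n$ be i.i.d. random variables with distribution $\mathrm{Erlang}(2,\lambda)$, and let $T_k=\frac{1}{n}\sum_{m=1}^n\tau^k_m-\frac{2}{\lambda}$. Then $$\Pr\left(\max_{1\le k\le n}|T_k|\le \frac{\ln n}{\lambda\sqrt n}\right)\ \ge\ \Psi(n),$$ where $$\Psi(n)=\max\left\{0,\ 1-\left(1-\frac{\ln n}{2\sqrt n}\right)^{2n}n^{1+\sqrt n}-\left(1+\frac{\ln n}{2\sqrt n}\right)^{2n}n^{1-\sqrt n}\right\}.$$ Moreover, $\Psi(n)\to 1$ as $n\to\infty$.
   Context: $\mathrm{Erlang}(2,\lambda)$ denotes the distribution of the sum of two independent exponential random variables with parameter $\lambda$. No independence between the families $(\tau^k_m)_m$ for different $k$ is assumed. *)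

theory Defs
  imports "HOL-Probability.Probability"
begin

text \<open>Psi(n) from the paper. Note erlang_density k l is the Erlang density with shape k+1,
  so Erlang(2,l) is erlang_density 1 l.\<close>
definition Psi :: "nat \<Rightarrow> real" where
  "Psi n = max 0 (1 - (1 - ln (real n) / (2 * sqrt (real n))) ^ (2 * n) * real n powr (1 + sqrt (real n))
                     - (1 + ln (real n) / (2 * sqrt (real n))) ^ (2 * n) * real n powr (1 - sqrt (real n)))"

end

theory Submission
  imports Defs "HOL-Real_Asymp.Real_Asymp"
begin

lemma erl_shift:
  assumes "0 < l" "t < l"
  shows "erlang_density k l y * exp (t * y) = (l / (l - t)) ^ Suc k * erlang_density k (l - t) y"
proof (cases "y < 0")
  case True then show ?thesis by (simp add: erlang_density_def)
next
  case False
  have ne: "l - t \<noteq> 0" using assms by simp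
  have e: "exp (- l * y) * exp (t * y) = exp (- (l - t) * y)"
  proof -
    have "- l * y + t * y = - (l - t) * y" by algebra
    then show ?thesis by (metis exp_add)
  qed
  have "erlang_density k l y * exp (t * y) = l ^ Suc k * y ^ k * (exp (- l * y) * exp (t * y)) / fact k"
    using False by (simp add: erlang_density_def)
  also have "\<dots> = l ^ Suc k * y ^ k * exp (- (l - t) * y) / fact k" by (simp only: e)
  also have "\<dots> = (l / (l - t)) ^ Suc k * ((l - t) ^ Suc k * y ^ k * exp (- (l - t) * y) / fact k)"
    using ne by (simp add: power_divide field_simps)
  also have "\<dots> = (l / (l - t)) ^ Suc k * erlang_density k (l - t) y"
    using False by (simp add: erlang_density_def)
  finally show ?thesis .
qed

lemma erl_mgf:
  assumes "0 < l" "t < l"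
  shows "(\<integral>\<^sup>+y. ennreal (erlang_density k l y * exp (t * y)) \<partial>lborel) = ennreal ((l / (l - t)) ^ Suc k)"
proof -
  have "(\<integral>\<^sup>+y. ennreal (erlang_density k l y * exp (t * y)) \<partial>lborel)
      = (\<integral>\<^sup>+y. ennreal ((l / (l - t)) ^ Suc k) * ennreal (erlang_density k (l - t) y) \<partial>lborel)"
    using assms by (intro nn_integral_cong) (simp add: erl_shift ennreal_mult[symmetric])
  also have "\<dots> = ennreal ((l / (l - t)) ^ Suc k) * (\<integral>\<^sup>+y. ennreal (erlang_density k (l - t) y) \<partial>lborel)"
    by (rule nn_integral_cmult) simp
  also have "(\<integral>\<^sup>+y. ennreal (erlang_density k (l - t) y) \<partial>lborel) = 1"
    using nn_integral_erlang_ith_moment[of "l - t" k 0] assms by simp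
  finally show ?thesis by simp
qed

lemma erl_tail:
  assumes P: "prob_space M" and D: "distributed M lborel X (erlang_density k l)"
    and l: "0 < l" "t < l" and A: "A \<in> sets borel" and B: "\<And>y. y \<in> A \<Longrightarrow> 1 \<le> exp (t * (y - x))"
  shows "measure M (X -` A \<inter> space M) \<le> exp (- t * x) * (l / (l - t)) ^ Suc k"
proof -
  interpret prob_space M by (rule P)
  have "emeasure M (X -` A \<inter> space M) = (\<integral>\<^sup>+y. ennreal (erlang_density k l y) * indicator A y \<partial>lborel)"
    using distributed_emeasure[OF D] A by simp
  also have "\<dots> \<le> (\<integral>\<^sup>+y. ennreal (exp (- t * x)) * ennreal (erlang_density k l y * exp (t * y)) \<partial>lborel)"
  proof (intro nn_integral_mono)
    fix y
    have "indicator A y \<le> exp (- t * x) * exp (t * y)"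
      using B[of y] by (auto simp: indicator_def exp_add[symmetric] algebra_simps)
    then have "erlang_density k l y * indicator A y \<le> erlang_density k l y * (exp (- t * x) * exp (t * y))"
      using l by (intro mult_left_mono) auto
    then show "ennreal (erlang_density k l y) * indicator A y \<le> ennreal (exp (- t * x)) * ennreal (erlang_density k l y * exp (t * y))"
      using l by (simp add: ennreal_mult[symmetric] ennreal_indicator[symmetric] mult_ac del: ennreal_indicator)
  qed
  also have "\<dots> = ennreal (exp (- t * x)) * (\<integral>\<^sup>+y. ennreal (erlang_density k l y * exp (t * y)) \<partial>lborel)"
    by (rule nn_integral_cmult) simp
  also have "\<dots> = ennreal (exp (- t * x)) * ennreal ((l / (l - t)) ^ Suc k)"
    by (simp only: erl_mgf[OF l])
  also have "\<dots> = ennreal (exp (- t * x) * (l / (l - t)) ^ Suc k)"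
    using l by (intro ennreal_mult[symmetric]) auto
  finally show ?thesis
    using l by (simp add: emeasure_eq_measure)
qed


lemma Psi_lim: "Psi \<longlonglongrightarrow> 1"
proof -
  have A: "(\<lambda>n::nat. (1 - ln (real n) / (2 * sqrt (real n))) ^ (2 * n) * real n powr (1 + sqrt (real n))) \<longlonglongrightarrow> 0"
    by real_asymp
  have B: "(\<lambda>n::nat. (1 + ln (real n) / (2 * sqrt (real n))) ^ (2 * n) * real n powr (1 - sqrt (real n))) \<longlonglongrightarrow> 0"
    by real_asymp
  have "(\<lambda>n. max 0 (1 - (1 - ln (real n) / (2 * sqrt (real n))) ^ (2 * n) * real n powr (1 + sqrt (real n))
                     - (1 + ln (real n) / (2 * sqrt (real n))) ^ (2 * n) * real n powr (1 - sqrt (real n)))) \<longlonglongrightarrow> max 0 (1 - 0 - 0)"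
    by (intro tendsto_intros A B)
  then show ?thesis by (simp add: Psi_def[abs_def])
qed

lemma delta_lt1:
  assumes "n \<ge> (2::nat)"
  shows "ln (real n) < 2 * sqrt (real n)"
proof -
  have p: "sqrt (real n) > 0" using assms by simp
  have "ln (real n) = 2 * ln (sqrt (real n))"
    using assms by (simp add: ln_sqrt)
  also have "ln (sqrt (real n)) \<le> sqrt (real n) - 1" using p by (rule ln_le_minus_one)
  finally show ?thesis by simp
qed

theorem theorem5:
  fixes M :: "'a measure" and \<tau> :: "nat \<Rightarrow> nat \<Rightarrow> 'a \<Rightarrow> real" and n :: nat and l :: real
  assumes "prob_space M"
    and "n \<ge> 2" and "l > 0"
    and "\<And>k m. k \<in> {1..n} \<Longrightarrow> m \<in> {1..n} \<Longrightarrow>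
           distributed M lborel (\<tau> k m) (erlang_density 1 l)"
    and "\<And>k. k \<in> {1..n} \<Longrightarrow> prob_space.indep_vars M (\<lambda>_. borel) (\<tau> k) {1..n}"
  shows "measure M {\<omega> \<in> space M.
            (MAX k\<in>{1..n}. \<bar>(1 / real n) * (\<Sum>m=1..n. \<tau> k m \<omega>) - 2 / l\<bar>)
              \<le> ln (real n) / (l * sqrt (real n))} \<ge> Psi n
         \<and> Psi \<longlonglongrightarrow> 1"
proof
  show "Psi \<longlonglongrightarrow> 1" by (rule Psi_lim)
next
  interpret prob_space M by (rule assms(1))
  have n2: "n \<ge> 2" and l: "l > 0" by (fact assms(2), fact assms(3))
  define d where "d = ln (real n) / (2 * sqrt (real n))"
  have sq: "sqrt (real n) > 0" using n2 by simp
  have d0: "0 \<le> d" using n2 by (simp add: d_def)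
  have d1: "d < 1" using delta_lt1[OF n2] sq by (simp add: d_def)
  have dp: "1 + d > 0" "1 - d > 0" using d0 d1 by auto
  have dq1: "l * (1 + d) > 0" "l * (1 - d) > 0" using dp l by simp_all
  have dq: "l + d * l \<noteq> 0" "l - d * l \<noteq> 0" "l * (1 + d) \<noteq> 0" "l * (1 - d) \<noteq> 0"
    using dq1 d1 by (simp_all add: algebra_simps)
  define S where "S k \<omega> = (\<Sum>m=1..n. \<tau> k m \<omega>)" for k \<omega>
  have Sd: "distributed M lborel (S k) (erlang_density (2 * n - 1) l)" if k: "k \<in> {1..n}" for k
  proof -
    have "distributed M lborel (\<lambda>x. \<Sum>i\<in>{1..n}. \<tau> k i x) (erlang_density ((\<Sum>i\<in>{1..n}. Suc 1) - 1) l)"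
      using n2 l assms(4)[OF k] assms(5)[OF k] by (intro erlang_distributed_sum) auto
    moreover have "(\<Sum>i\<in>{1..n}. Suc 1) - 1 = 2 * n - 1" by simp
    ultimately show ?thesis by (simp add: S_def[abs_def])
  qed
  have Sm[measurable]: "S k \<in> borel_measurable M" if "k \<in> {1..n}" for k
    using distributed_measurable[OF Sd[OF that]] by simp
  have tm[measurable]: "\<tau> k m \<in> borel_measurable M" if "k \<in> {1..n}" "m \<in> {1..n}" for k m
    using distributed_measurable[OF assms(4)[OF that]] by simp
  have SucK: "Suc (2 * n - 1) = 2 * n" using n2 by simp
  define x1 where "x1 = 2 * n * (1 + d) / l"
  define x2 where "x2 = 2 * n * (1 - d) / l"
  define U where "U k = S k -` {x1..} \<inter> space M" for k
  define L where "L k = S k -` {..x2} \<inter> space M" for k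
  define BU where "BU = (1 + d) ^ (2 * n) * exp (- (2 * n * d))"
  define BL where "BL = (1 - d) ^ (2 * n) * exp (2 * n * d)"
  have ULm: "U k \<in> sets M" "L k \<in> sets M" if "k \<in> {1..n}" for k
    unfolding U_def L_def using Sm[OF that] by (auto intro!: measurable_sets)
  have mU: "measure M (U k) \<le> BU" if k: "k \<in> {1..n}" for k
  proof -
    define t where "t = l * d / (1 + d)"
    have t0: "0 \<le> t" using l d0 by (simp add: t_def)
    have tl: "t < l" using l dp dq by (simp add: t_def field_simps)
    have "measure M (U k) \<le> exp (- t * x1) * (l / (l - t)) ^ Suc (2 * n - 1)"
      unfolding U_def
    proof (rule erl_tail[OF assms(1) Sd[OF k] l tl])
      show "{x1..} \<in> sets borel" by simp
      fix y assume "y \<in> {x1..}"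
      then show "1 \<le> exp (t * (y - x1))" using t0 by simp
    qed
    moreover have e1: "t * x1 = 2 * n * d" using l dp dq by (simp add: t_def x1_def field_simps)
    moreover have e2: "l / (l - t) = 1 + d" using l dp dq by (simp add: t_def field_simps)
    ultimately show ?thesis unfolding SucK BU_def by (simp add: mult_ac)
  qed
  have mL: "measure M (L k) \<le> BL" if k: "k \<in> {1..n}" for k
  proof -
    define t where "t = - (l * d / (1 - d))"
    have t0: "t \<le> 0" using l d0 d1 by (simp add: t_def)
    have tl: "t < l" using t0 l by simp
    have "measure M (L k) \<le> exp (- t * x2) * (l / (l - t)) ^ Suc (2 * n - 1)"
      unfolding L_def
    proof (rule erl_tail[OF assms(1) Sd[OF k] l tl])
      show "{..x2} \<in> sets borel" by simp
      fix y assume "y \<in> {..x2}"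
      then have "0 \<le> t * (y - x2)" using t0 by (simp add: mult_nonpos_nonpos)
      then show "1 \<le> exp (t * (y - x2))" by simp
    qed
    moreover have e1: "t * x2 = - (2 * n * d)" using l dp dq by (simp add: t_def x2_def field_simps)
    moreover have e2: "l / (l - t) = 1 - d" using l dp dq by (simp add: t_def field_simps)
    ultimately show ?thesis unfolding SucK BL_def by (simp add: mult_ac)
  qed
  define E where "E = {\<omega> \<in> space M.
            (MAX k\<in>{1..n}. \<bar>(1 / real n) * (\<Sum>m=1..n. \<tau> k m \<omega>) - 2 / l\<bar>)
              \<le> ln (real n) / (l * sqrt (real n))}"
  define B where "B = (\<Union>k\<in>{1..n}. U k \<union> L k)"
  have Em: "E \<in> sets M" unfolding E_def by measurable
  have Bm: "B \<in> sets M" unfolding B_def U_def L_def by measurable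
  have sub: "space M - B \<subseteq> E"
  proof
    fix \<omega> assume w: "\<omega> \<in> space M - B"
    have "\<bar>(1 / real n) * (\<Sum>m=1..n. \<tau> k m \<omega>) - 2 / l\<bar> \<le> ln (real n) / (l * sqrt (real n))"
      if k: "k \<in> {1..n}" for k
    proof -
      have "\<not> x1 \<le> S k \<omega> \<and> \<not> S k \<omega> \<le> x2" using w k unfolding B_def U_def L_def by blast
      then have "x2 < S k \<omega>" "S k \<omega> < x1" by auto
      then have "2 * n * (1 - d) < S k \<omega> * l" "S k \<omega> * l < 2 * n * (1 + d)"
        using l by (auto simp: x1_def x2_def field_simps)
      then have "\<bar>S k \<omega> * l - 2 * n\<bar> \<le> 2 * n * d" by (simp add: algebra_simps abs_le_iff)
      moreover have "ln (real n) / (l * sqrt (real n)) = 2 * d / l" using sq by (simp add: d_def)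
      moreover have "(1 / real n) * S k \<omega> - 2 / l = (S k \<omega> * l - 2 * n) / (n * l)"
        using l n2 by (simp add: field_simps)
      ultimately show ?thesis using l n2
        by (simp add: S_def abs_divide abs_mult divide_le_eq field_simps)
    qed
    then show "\<omega> \<in> E" using w n2 unfolding E_def by (subst Max_le_iff) auto
  qed
  have "1 - real n * (BU + BL) \<le> 1 - measure M B"
  proof -
    have "measure M B \<le> (\<Sum>k\<in>{1..n}. measure M (U k \<union> L k))"
      unfolding B_def by (rule finite_measure_subadditive_finite) (auto simp: ULm)
    also have "\<dots> \<le> (\<Sum>k\<in>{1..n}. BU + BL)"
    proof (rule sum_mono)
      fix k assume k: "k \<in> {1..n}"
      have "measure M (U k \<union> L k) \<le> measure M (U k) + measure M (L k)"
        by (rule measure_subadditive) (auto simp: ULm[OF k])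
      then show "measure M (U k \<union> L k) \<le> BU + BL" using mU[OF k] mL[OF k] by simp
    qed
    finally show ?thesis by simp
  qed
  also have "1 - measure M B = measure M (space M - B)" using prob_compl[OF Bm] by simp
  also have "\<dots> \<le> measure M E" using sub Em by (rule finite_measure_mono)
  finally have main: "1 - real n * (BU + BL) \<le> measure M E" .
  have e: "exp (2 * n * d) = real n powr sqrt (real n)"
  proof -
    have "2 * n * d = sqrt (real n) * ln (real n)"
      using sq by (simp add: d_def field_simps)
    then show ?thesis using n2 by (simp add: powr_def)
  qed
  have e2: "exp (- (2 * n * d)) = inverse (real n powr sqrt (real n))"
    by (subst exp_minus) (simp only: e)
  have "real n * (BU + BL) = (1 - d) ^ (2 * n) * real n powr (1 + sqrt (real n))
                 + (1 + d) ^ (2 * n) * real n powr (1 - sqrt (real n))"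
    unfolding BU_def BL_def e e2 using n2 by (simp add: powr_add powr_diff field_simps)
  then have "Psi n = max 0 (1 - real n * (BU + BL))"
    by (simp add: Psi_def d_def)
  then show "measure M E \<ge> Psi n" using main by simp
qed

end
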